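(* For any $M\in\mathrm{SL}(3,\mathbb R)$ we have $\mathcal G_{\mathbb S_1^1}(M)\le5$.
   Context: Here $d=2$ and $\mathbb S_1^1$ is the unit circle in $\mathbb R^2$. Elements of $\mathbb R^{3}$ are row vectors $(u,\vec v)$ with $u\in\mathbb R$, $\vec v\in\mathbb R^2$; $\mathbb Z^{3}M$ is the lattice of row vectors $\vec mM$, $\vec m\in\mathbb Z^3$. For $\mathcal D\subseteq\mathbb S_1^{1}$ and $t\in(0,1)$, $\mathcal Q_{\mathcal D}(M,t)=\{(u,\vec v)\in\mathbb Z^{3}M : -t<u<1-t,\ \vec v\in\mathbb R_{>0}\mathcal D\}$, $F_{\mathcal D}(M,t)=\min\{|\vec v| : (u,\vec v)\in\mathcal Q_{\mathcal D}(M,t)\}$, and $\mathcal G_{\mathcal D}(M)=|\{F_{\mathcal D}(M,t):0<t<1\}|$. For $\mathcal D=\mathbb S_1^1$ one has $\mathbb R_{>0}\mathcal D=\mathbb R^2\setminus\{0\}$. *)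

theory Defs
  imports "HOL-Analysis.Analysis"
begin

text \<open>Row vectors in R^3 are elements of real^3; the first coordinate is u,
  the last two form the vector v in R^2.\<close>

definition lattice3 :: "real^3^3 \<Rightarrow> (real^3) set" where
  "lattice3 M = {(\<chi> i. of_int (m $ i)) v* M | m :: int^3. True}"

definition vpart :: "real^3 \<Rightarrow> real^2" where
  "vpart x = (\<chi> i. if i = 1 then x $ 2 else x $ 3)"

definition QD :: "(real^2) set \<Rightarrow> real^3^3 \<Rightarrow> real \<Rightarrow> (real^3) set" where
  "QD D M t = {x \<in> lattice3 M. - t < x $ 1 \<and> x $ 1 < 1 - t \<and>
                 (\<exists>c>0. \<exists>d\<in>D. vpart x = c *\<^sub>R d)}"

definition FD :: "(real^2) set \<Rightarrow> real^3^3 \<Rightarrow> real \<Rightarrow> real" where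
  "FD D M t = Inf ((\<lambda>x. norm (vpart x)) ` QD D M t)"

definition GD_set :: "(real^2) set \<Rightarrow> real^3^3 \<Rightarrow> real set" where
  "GD_set D M = {FD D M t | t. 0 < t \<and> t < 1}"

end

theory Submission
  imports Defs "HOL-Analysis.Analysis"
begin


definition cv :: "real^3 \<Rightarrow> complex" where "cv x = Complex (x$2) (x$3)"

lemma norm_vpart: "norm (vpart x) = cmod (cv x)"
  by (simp add: vpart_def cv_def norm_vec_def L2_set_def sum_2 cmod_def)

lemma vpart_ne0: "vpart x \<noteq> 0 \<longleftrightarrow> cv x \<noteq> 0"
  by (metis norm_eq_zero norm_vpart)

lemma cv_add: "cv (x + y) = cv x + cv y" by (simp add: cv_def complex_eq_iff)
lemma cv_diff: "cv (x - y) = cv x - cv y" by (simp add: cv_def complex_eq_iff)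
lemma cv_minus: "cv (- x) = - cv x" by (simp add: cv_def complex_eq_iff)

lemma lat_add: "x \<in> lattice3 M \<Longrightarrow> y \<in> lattice3 M \<Longrightarrow> x + y \<in> lattice3 M"
proof -
  assume "x \<in> lattice3 M" "y \<in> lattice3 M"
  then obtain m n where x: "x = (\<chi> i. of_int (m $ i)) v* M" and y: "y = (\<chi> i. of_int (n $ i)) v* M"
    by (auto simp: lattice3_def)
  have e: "(\<chi> i. of_int (m $ i)) + (\<chi> i. of_int (n $ i)) = (\<chi> i. (of_int ((m+n) $ i)::real))"
    by (simp add: vec_eq_iff)
  have "x + y = (\<chi> i. of_int ((m+n) $ i)) v* M"
    unfolding x y vector_matrix_left_distrib[symmetric] e by simp
  then show ?thesis unfolding lattice3_def by blast
qed

lemma lat_minus: "x \<in> lattice3 M \<Longrightarrow> - x \<in> lattice3 M"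
proof -
  assume "x \<in> lattice3 M"
  then obtain m where x: "x = (\<chi> i. of_int (m $ i)) v* M"
    by (auto simp: lattice3_def)
  have "- x = (\<chi> i. of_int ((-m) $ i)) v* M"
    unfolding x by (simp add: vec_eq_iff vector_matrix_mult_def sum_negf)
  then show ?thesis unfolding lattice3_def by blast
qed

lemma lat_diff: "x \<in> lattice3 M \<Longrightarrow> y \<in> lattice3 M \<Longrightarrow> x - y \<in> lattice3 M"
  using lat_add[of x M "-y"] lat_minus[of y M] by simp



lemma finite_int_box: "finite {m :: int^3. \<forall>i. \<bar>m$i\<bar> \<le> B}"
proof -
  have "{m :: int^3. \<forall>i. \<bar>m$i\<bar> \<le> B} \<subseteq> vec_lambda ` (Pi\<^sub>E UNIV (\<lambda>_. {-B..B}))"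
  proof
    fix m :: "int^3" assume "m \<in> {m. \<forall>i. \<bar>m$i\<bar> \<le> B}"
    then have "vec_nth m \<in> Pi\<^sub>E UNIV (\<lambda>_. {-B..B})" by (auto simp: abs_le_iff) (metis minus_le_iff)
    then show "m \<in> vec_lambda ` (Pi\<^sub>E UNIV (\<lambda>_. {-B..B}))"
      by (metis image_eqI vec_nth_inverse)
  qed
  moreover have "finite (vec_lambda ` (Pi\<^sub>E UNIV (\<lambda>_. {-B..B::int})) :: (int^3) set)"
    by (intro finite_imageI finite_PiE) auto
  ultimately show ?thesis by (rule finite_subset)
qed

lemma lattice_finite:
  fixes M :: "real^3^3"
  assumes "det M = 1"
  shows "finite {x \<in> lattice3 M. norm x \<le> R}"
proof -
  have "invertible M" using assms invertible_det_nz by force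
  then obtain N where MN: "M ** N = mat 1" unfolding invertible_def by blast
  have lin: "linear (\<lambda>x::real^3. x v* N)"
  proof -
    have eq: "(\<lambda>x::real^3. x v* N) = (\<lambda>x. transpose N *v x)"
      by (metis vector_transpose_matrix transpose_transpose)
    show ?thesis unfolding eq by (rule matrix_vector_mul_linear)
  qed
  then have "bounded_linear (\<lambda>x::real^3. x v* N)" using linear_conv_bounded_linear by blast
  then obtain K where K: "K > 0" "\<And>x. norm (x v* N) \<le> norm x * K"
    using bounded_linear.pos_bounded by blast
  define B where "B = \<lceil>R * K\<rceil>"
  have "{x \<in> lattice3 M. norm x \<le> R} \<subseteq> (\<lambda>m. (\<chi> i. of_int (m $ i)) v* M) ` {m :: int^3. \<forall>i. \<bar>m$i\<bar> \<le> B}"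
  proof
    fix x assume x: "x \<in> {x \<in> lattice3 M. norm x \<le> R}"
    then obtain m where xm: "x = (\<chi> i. of_int (m $ i)) v* M" by (auto simp: lattice3_def)
    have r: "x v* N = (\<chi> i. of_int (m $ i))"
      unfolding xm vector_matrix_mul_assoc MN by simp
    have "\<forall>i. \<bar>m$i\<bar> \<le> B"
    proof
      fix i
      have "\<bar>real_of_int (m$i)\<bar> = \<bar>(x v* N) $ i\<bar>" using r by simp
      also have "\<dots> \<le> norm (x v* N)" by (rule component_le_norm_cart)
      also have "\<dots> \<le> norm x * K" by (rule K(2))
      also have "\<dots> \<le> R * K" using x K(1) by (simp add: mult_right_mono)
      finally have "real_of_int \<bar>m$i\<bar> \<le> R * K" by simp
      then show "\<bar>m$i\<bar> \<le> B" unfolding B_def by linarith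
    qed
    then show "x \<in> (\<lambda>m. (\<chi> i. of_int (m $ i)) v* M) ` {m :: int^3. \<forall>i. \<bar>m$i\<bar> \<le> B}"
      using xm by blast
  qed
  then show ?thesis using finite_int_box finite_subset by blast
qed



definition Xs :: "real^3^3 \<Rightarrow> real \<Rightarrow> (real^3) set" where
  "Xs M s = {x \<in> lattice3 M. cv x \<noteq> 0 \<and> 0 \<le> x$1 \<and> x$1 < s}"

definition Gs :: "real^3^3 \<Rightarrow> real \<Rightarrow> real" where
  "Gs M s = Inf ((\<lambda>x. cmod (cv x)) ` Xs M s)"

lemma norm3_le: "norm (x::real^3) \<le> \<bar>x$1\<bar> + 2 * cmod (cv x)"
proof -
  have "norm x \<le> \<bar>x$1\<bar> + \<bar>x$2\<bar> + \<bar>x$3\<bar>" using norm_le_l1_cart[of x] by (simp add: sum_3)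
  moreover have "\<bar>x$2\<bar> \<le> cmod (cv x)" using abs_Re_le_cmod[of "cv x"] by (simp add: cv_def)
  moreover have "\<bar>x$3\<bar> \<le> cmod (cv x)" using abs_Im_le_cmod[of "cv x"] by (simp add: cv_def)
  ultimately show ?thesis by linarith
qed

lemma attain:
  assumes "det M = 1" "x0 \<in> Xs M s" "s \<le> 1"
  shows "\<exists>x \<in> Xs M s. (\<forall>y \<in> Xs M s. cmod (cv x) \<le> cmod (cv y)) \<and> Gs M s = cmod (cv x)"
proof -
  define f where "f = (\<lambda>x. cmod (cv x))"
  define Y where "Y = {x \<in> Xs M s. f x \<le> f x0}"
  have "Y \<subseteq> {x \<in> lattice3 M. norm x \<le> 1 + 2 * f x0}"
  proof
    fix x assume "x \<in> Y"
    then have "x \<in> lattice3 M" "0 \<le> x$1" "x$1 < s" "f x \<le> f x0"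
      by (auto simp: Y_def Xs_def)
    then show "x \<in> {x \<in> lattice3 M. norm x \<le> 1 + 2 * f x0}"
      using norm3_le[of x] assms(3) unfolding f_def by auto
  qed
  then have fin: "finite Y" using lattice_finite[OF assms(1)] finite_subset by blast
  have ne: "x0 \<in> Y" using assms(2) by (simp add: Y_def)
  define m where "m = Min (f ` Y)"
  have "m \<in> f ` Y" unfolding m_def using fin ne by (intro Min_in) auto
  then obtain x where x: "x \<in> Y" "f x = m" by auto
  have minY: "\<And>y. y \<in> Y \<Longrightarrow> f x \<le> f y" using fin x unfolding m_def by auto
  have minX: "\<forall>y \<in> Xs M s. f x \<le> f y"
  proof
    fix y assume y: "y \<in> Xs M s"
    show "f x \<le> f y"
    proof (cases "y \<in> Y")
      case True then show ?thesis by (rule minY)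
    next
      case False then have "f y > f x0" using y by (auto simp: Y_def)
      moreover have "f x \<le> f x0" using minY ne by blast
      ultimately show ?thesis by simp
    qed
  qed
  have xX: "x \<in> Xs M s" using x by (simp add: Y_def)
  have "Gs M s = f x" unfolding Gs_def f_def[symmetric]
    by (rule cInf_eq_minimum) (use xX minX in auto)
  then show ?thesis using xX minX unfolding f_def by blast
qed

lemma QD_iff:
  "x \<in> QD (sphere 0 1) M t \<longleftrightarrow> x \<in> lattice3 M \<and> -t < x$1 \<and> x$1 < 1 - t \<and> cv x \<noteq> 0"
proof -
  have "(\<exists>c>0. \<exists>d\<in>sphere 0 1. vpart x = c *\<^sub>R d) \<longleftrightarrow> vpart x \<noteq> 0"
  proof
    assume "\<exists>c>0. \<exists>d\<in>sphere 0 1. vpart x = c *\<^sub>R d"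
    then obtain c d where "c > 0" "norm d = 1" "vpart x = c *\<^sub>R d" by auto
    then show "vpart x \<noteq> 0" by auto
  next
    assume h: "vpart x \<noteq> 0"
    show "\<exists>c>0. \<exists>d\<in>sphere 0 1. vpart x = c *\<^sub>R d"
      by (rule exI[of _ "norm (vpart x)"], use h in simp)
         (rule bexI[of _ "vpart x /\<^sub>R norm (vpart x)"], use h in auto)
  qed
  then show ?thesis unfolding QD_def vpart_ne0 by auto
qed

lemma FD_eq:
  assumes "0 < t" "t < 1"
  shows "FD (sphere 0 1) M t = Gs M (max t (1 - t))"
proof -
  have "(\<lambda>x. norm (vpart x)) ` QD (sphere 0 1) M t = (\<lambda>x. cmod (cv x)) ` Xs M (max t (1 - t))"
  proof (rule set_eqI, rule iffI)
    fix y assume "y \<in> (\<lambda>x. norm (vpart x)) ` QD (sphere 0 1) M t"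
    then obtain x where x: "x \<in> lattice3 M" "-t < x$1" "x$1 < 1 - t" "cv x \<noteq> 0" "y = cmod (cv x)"
      by (auto simp: QD_iff norm_vpart)
    show "y \<in> (\<lambda>x. cmod (cv x)) ` Xs M (max t (1 - t))"
    proof (cases "0 \<le> x$1")
      case True
      then have "x \<in> Xs M (max t (1 - t))" using x by (auto simp: Xs_def)
      then show ?thesis using x by auto
    next
      case False
      then have "-x \<in> Xs M (max t (1 - t))" using x lat_minus[of x M]
        by (auto simp: Xs_def cv_minus)
      moreover have "y = cmod (cv (-x))" using x by (simp add: cv_minus)
      ultimately show ?thesis by blast
    qed
  next
    fix y assume "y \<in> (\<lambda>x. cmod (cv x)) ` Xs M (max t (1 - t))"
    then obtain x where x: "x \<in> lattice3 M" "0 \<le> x$1" "x$1 < max t (1 - t)" "cv x \<noteq> 0" "y = cmod (cv x)"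
      by (auto simp: Xs_def)
    show "y \<in> (\<lambda>x. norm (vpart x)) ` QD (sphere 0 1) M t"
    proof (cases "x$1 < 1 - t")
      case True
      then have "x \<in> QD (sphere 0 1) M t" using x assms by (auto simp: QD_iff)
      then show ?thesis using x by (auto simp: norm_vpart)
    next
      case False
      then have "x$1 < t" using x by auto
      then have "-x \<in> QD (sphere 0 1) M t" using x assms False lat_minus[of x M]
        by (auto simp: QD_iff cv_minus)
      moreover have "y = norm (vpart (-x))" using x by (simp add: cv_minus norm_vpart)
      ultimately show ?thesis by blast
    qed
  qed
  then show ?thesis unfolding FD_def Gs_def by simp
qed



lemma coord_case1:
  fixes a1 s c1 t :: real
  assumes "a1 + c1 > 0" "s \<ge> t" "t > 0" "2 * c1 < 1" "1 \<le> c1^2 + t^2"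
  shows "(a1 + c1 - 1)^2 + (s - t)^2 < a1^2 + s^2"
proof -
  have id: "a1^2 + s^2 - ((a1 + c1 - 1)^2 + (s - t)^2) = 2*(a1+c1)*(1-c1) + (t^2 - 1 + c1^2) + 2*t*(s-t)"
    by (simp add: algebra_simps power2_eq_square)
  have "2*(a1+c1)*(1-c1) > 0" using assms by simp
  moreover have "2*t*(s-t) \<ge> 0" using assms by simp
  ultimately show ?thesis using id assms by linarith
qed

lemma coord_case3:
  fixes a1 s c1 t :: real
  assumes "a1 > 0" "a1 + c1 \<le> 0" "s > 0" "s * c1 + t * a1 > 0" "2 * a1 < 1" "1 \<le> a1^2 + s^2"
  shows "(a1 + c1 - 1)^2 + (s - t)^2 < c1^2 + t^2"
proof -
  define d where "d = - c1"
  have id: "a1 * (c1^2 + t^2 - ((a1 + c1 - 1)^2 + (s - t)^2)) =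
     2 * s * (s * c1 + t * a1) + (s^2 + a1^2 - 1)*(2*d - a1) + 2*(d - a1)*(1-a1)"
    unfolding d_def by (simp add: algebra_simps power2_eq_square)
  have "2 * s * (s * c1 + t * a1) > 0" using assms by simp
  moreover have "(s^2 + a1^2 - 1)*(2*d - a1) \<ge> 0" using assms unfolding d_def by simp
  moreover have "2*(d - a1)*(1-a1) \<ge> 0" using assms unfolding d_def by simp
  ultimately have "a1 * (c1^2 + t^2 - ((a1 + c1 - 1)^2 + (s - t)^2)) > 0" using id by linarith
  then have "c1^2 + t^2 - ((a1 + c1 - 1)^2 + (s - t)^2) > 0" using assms(1)
    by (simp add: zero_less_mult_iff)
  then show ?thesis by simp
qed

lemma coord_lemma:
  fixes a1 s c1 t :: real
  assumes "s > 0" "t > 0" "s * c1 + t * a1 > 0" "2 * a1 < 1" "2 * c1 < 1"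
    "1 \<le> a1^2 + s^2" "1 \<le> c1^2 + t^2"
  shows "(a1 + c1 - 1)^2 + (s - t)^2 < max (a1^2 + s^2) (c1^2 + t^2)"
proof (cases "a1 + c1 > 0")
  case True
  show ?thesis
  proof (cases "s \<ge> t")
    case True
    have "(a1 + c1 - 1)^2 + (s - t)^2 < a1^2 + s^2"
      by (rule coord_case1) (use True \<open>a1 + c1 > 0\<close> assms in auto)
    then show ?thesis by (simp add: less_max_iff_disj)
  next
    case False
    have "(c1 + a1 - 1)^2 + (t - s)^2 < c1^2 + t^2"
      by (rule coord_case1) (use False \<open>a1 + c1 > 0\<close> assms in auto)
    then show ?thesis by (simp add: power2_commute add.commute less_max_iff_disj)
  qed
next
  case False
  have "a1 > 0 \<or> c1 > 0"
  proof (rule ccontr)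
    assume "\<not> (a1 > 0 \<or> c1 > 0)"
    then have "s * c1 \<le> 0" "t * a1 \<le> 0" using assms by (auto simp: mult_nonneg_nonpos)
    then show False using assms by linarith
  qed
  then show ?thesis
  proof
    assume "a1 > 0"
    have "(a1 + c1 - 1)^2 + (s - t)^2 < c1^2 + t^2"
      by (rule coord_case3) (use \<open>a1 > 0\<close> False assms in auto)
    then show ?thesis by (simp add: less_max_iff_disj)
  next
    assume "c1 > 0"
    have "(c1 + a1 - 1)^2 + (t - s)^2 < a1^2 + s^2"
      by (rule coord_case3) (use \<open>c1 > 0\<close> False assms in \<open>auto simp: add.commute mult.commute\<close>)
    then show ?thesis by (simp add: power2_commute add.commute less_max_iff_disj)
  qed
qed

lemma cos_lt_half:
  fixes x :: real
  assumes "cos x < 1/2" "-2*pi < x" "x < 2*pi"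
  shows "pi/3 < \<bar>x\<bar> \<and> \<bar>x\<bar> < 5*pi/3"
proof -
  have c: "cos \<bar>x\<bar> < 1/2" using assms by (simp add: abs_if)
  have 1: "pi/3 < \<bar>x\<bar>"
  proof (rule ccontr)
    assume "\<not> pi/3 < \<bar>x\<bar>"
    then have "\<bar>x\<bar> \<le> pi/3" by simp
    then have "cos (pi/3) \<le> cos \<bar>x\<bar>" by (intro cos_monotone_0_pi_le) auto
    then show False using c by (simp add: cos_60)
  qed
  have 2: "\<bar>x\<bar> < 5*pi/3"
  proof (rule ccontr)
    assume "\<not> \<bar>x\<bar> < 5*pi/3"
    then have h: "2*pi - \<bar>x\<bar> \<le> pi/3" "0 \<le> 2*pi - \<bar>x\<bar>" using assms by auto
    then have "cos (pi/3) \<le> cos (2*pi - \<bar>x\<bar>)" by (intro cos_monotone_0_pi_le) auto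
    moreover have "cos (2*pi - \<bar>x\<bar>) = cos \<bar>x\<bar>" by (simp add: cos_diff)
    ultimately show False using c by (simp add: cos_60)
  qed
  show ?thesis using 1 2 by simp
qed

lemma select_sorted:
  fixes q1 q2 q3 q4 :: real
  assumes "q1 < q2" "q2 < q3" "q3 < q4"
    and "-pi < q1" "q4 \<le> pi"
    and "pi/3 < \<bar>q2\<bar>" "pi/3 < \<bar>q3\<bar>"
    and "pi/3 < \<bar>q2 - q1\<bar>" "pi/3 < \<bar>q3 - q2\<bar>" "pi/3 < \<bar>q4 - q3\<bar>" "\<bar>q4 - q1\<bar> < 5*pi/3"
  shows "0 < q3 \<and> q3 < pi \<and> q2 < 0 \<and> q3 - q2 < pi"
proof -
  have d: "pi/3 < q2 - q1" "pi/3 < q3 - q2" "pi/3 < q4 - q3" "q4 - q1 < 5*pi/3" using assms by auto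
  have "q2 < 0"
  proof (rule ccontr)
    assume "\<not> q2 < 0"
    then have "pi/3 < q2" using assms(6) by auto
    then show False using d assms(5) by linarith
  qed
  moreover have "0 < q3"
  proof (rule ccontr)
    assume "\<not> 0 < q3"
    then have "q3 < -pi/3" using assms(7) by auto
    then show False using d assms(4) by linarith
  qed
  ultimately show ?thesis using d assms by linarith
qed



lemma cmod_cos_Arg: "z \<noteq> 0 \<Longrightarrow> cmod z * cos (Arg z) = Re z"
  using Arg_eq [of z] by (metis Re_exp exp_Ln norm_exp_eq_Re Arg_def)
lemma cmod_sin_Arg: "z \<noteq> 0 \<Longrightarrow> cmod z * sin (Arg z) = Im z"
  using Arg_eq [of z] by (metis Im_exp exp_Ln norm_exp_eq_Re Arg_def)

lemma cmod_sq: "(cmod z)^2 = (Re z)^2 + (Im z)^2"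
  by (simp add: cmod_power2)

lemma dot_lt:
  fixes a b :: complex
  assumes "r \<le> cmod (a - b)" "cmod a < r" "cmod b < r"
  shows "2 * (Re a * Re b + Im a * Im b) < cmod a * cmod b"
proof -
  have e: "(cmod (a - b))^2 = (cmod a)^2 + (cmod b)^2 - 2 * (Re a * Re b + Im a * Im b)"
    unfolding cmod_sq by (simp add: power2_eq_square algebra_simps)
  have r0: "0 \<le> r" using assms(2) norm_ge_zero[of a] by linarith
  have "r^2 \<le> (cmod (a - b))^2" using assms(1) r0 by (simp add: power_mono)
  moreover have "(cmod a)^2 < r^2" using assms(2) by (simp add: power_strict_mono)
  moreover have "(cmod b)^2 < r^2" using assms(3) by (simp add: power_strict_mono)
  moreover have "(cmod a)^2 \<le> cmod a * cmod b \<or> (cmod b)^2 \<le> cmod a * cmod b"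
    by (metis le_cases mult_right_mono mult_left_mono norm_ge_zero power2_eq_square)
  ultimately show ?thesis using e by linarith
qed

lemma re_lt_half:
  fixes a :: complex
  assumes "cmod a < cmod (a - 1)"
  shows "2 * Re a < 1"
proof -
  have "(cmod a)^2 < (cmod (a - 1))^2" using assms by (simp add: power_strict_mono)
  then have "(Re a)^2 + (Im a)^2 < (Re a - 1)^2 + (Im a)^2" unfolding cmod_sq by simp
  then show ?thesis by (simp add: power2_eq_square algebra_simps)
qed

lemma geom:
  fixes z :: "nat \<Rightarrow> complex" and R :: real
  assumes z5: "z 5 \<noteq> 0"
    and short: "\<And>k. k \<in> {1..4} \<Longrightarrow> cmod (z 5) < cmod (z k) \<and> cmod (z k) < R"
    and sep: "\<And>k l. k \<in> {1..5} \<Longrightarrow> l \<in> {1..5} \<Longrightarrow> k \<noteq> l \<Longrightarrow> R \<le> cmod (z k - z l)"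
    and D: "\<And>i j. i \<in> {1..4} \<Longrightarrow> j \<in> {1..4} \<Longrightarrow> i \<noteq> j \<Longrightarrow> z i + z j - z 5 \<noteq> 0 \<Longrightarrow>
              max (cmod (z i)) (cmod (z j)) \<le> cmod (z i + z j - z 5)"
  shows False
proof -
  define w where "w k = z k / z 5" for k
  define R' where "R' = R / cmod (z 5)"
  have n5: "cmod (z 5) > 0" using z5 by simp
  have w5: "w 5 = 1" using z5 by (simp add: w_def)
  have wk: "cmod (w k) = cmod (z k) / cmod (z 5)" for k by (simp add: w_def norm_divide)
  have wne: "w k \<noteq> 0" "1 < cmod (w k)" "cmod (w k) < R'" if "k \<in> {1..4}" for k
  proof -
    have h: "cmod (z 5) < cmod (z k)" "cmod (z k) < R" using short[OF that] by auto
    then show "w k \<noteq> 0" using n5 by (auto simp: w_def)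
    show "1 < cmod (w k)" unfolding wk using h n5 by (simp add: less_divide_eq)
    show "cmod (w k) < R'" unfolding wk R'_def using h n5 by (simp add: divide_strict_right_mono)
  qed
  have R'1: "1 < R'" using wne(2,3)[of 1] by simp
  have sepw: "R' \<le> cmod (w k - w l)" if "k \<in> {1..5}" "l \<in> {1..5}" "k \<noteq> l" for k l
  proof -
    have "w k - w l = (z k - z l) / z 5" by (simp add: w_def diff_divide_distrib)
    then have "cmod (w k - w l) = cmod (z k - z l) / cmod (z 5)" by (simp add: norm_divide)
    then show ?thesis using sep[OF that] n5 by (simp add: R'_def divide_right_mono)
  qed
  have wlt: "cmod (w k) < R'" if "k \<in> {1..5}" for k
    using that wne(3)[of k] w5 R'1 by (cases "k = 5") auto
  define \<phi> where "\<phi> k = Arg (w k)" for k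
  have Re_w: "Re (w k) = cmod (w k) * cos (\<phi> k)" and Im_w: "Im (w k) = cmod (w k) * sin (\<phi> k)"
    if "k \<in> {1..5}" for k
  proof -
    have "w k \<noteq> 0" using that wne(1)[of k] w5 by (cases "k = 5") auto
    then show "Re (w k) = cmod (w k) * cos (\<phi> k)" "Im (w k) = cmod (w k) * sin (\<phi> k)"
      by (simp_all add: \<phi>_def cmod_cos_Arg cmod_sin_Arg)
  qed
  have phi5: "\<phi> 5 = 0" using w5 by (simp add: \<phi>_def)
  have wpos: "0 < cmod (w k)" if "k \<in> {1..5}" for k
    using that wne(2)[of k] w5 by (cases "k = 5") auto
  have cosd: "cos (\<phi> k - \<phi> l) < 1/2" if "k \<in> {1..5}" "l \<in> {1..5}" "k \<noteq> l" for k l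
  proof -
    have "2 * (Re (w k) * Re (w l) + Im (w k) * Im (w l)) < cmod (w k) * cmod (w l)"
      by (rule dot_lt[OF sepw[OF that] wlt wlt]) (use that in auto)
    then have "2 * (cmod (w k) * cmod (w l) * cos (\<phi> k - \<phi> l)) < cmod (w k) * cmod (w l) * 1"
      using that by (simp add: Re_w Im_w cos_diff algebra_simps)
    then have "cmod (w k) * cmod (w l) * (2 * cos (\<phi> k - \<phi> l)) < cmod (w k) * cmod (w l) * 1"
      by (simp add: algebra_simps)
    then have "2 * cos (\<phi> k - \<phi> l) < 1"
      using wpos[OF that(1)] wpos[OF that(2)] by (simp add: mult_less_cancel_left_pos)
    then show ?thesis by simp
  qed
  have prange: "-pi < \<phi> k \<and> \<phi> k \<le> pi" for k by (simp add: \<phi>_def mpi_less_Arg Arg_le_pi)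
  have pdiff: "pi/3 < \<bar>\<phi> k - \<phi> l\<bar> \<and> \<bar>\<phi> k - \<phi> l\<bar> < 5*pi/3"
    if "k \<in> {1..5}" "l \<in> {1..5}" "k \<noteq> l" for k l
    using cos_lt_half[OF cosd[OF that]] prange[of k] prange[of l] by auto
  have pabs: "pi/3 < \<bar>\<phi> k\<bar>" if "k \<in> {1..4}" for k
    using pdiff[of k 5] that phi5 by auto
  define S where "S = \<phi> ` {1..4}"
  have inj: "inj_on \<phi> {1..4}"
  proof (rule inj_onI)
    fix k l assume "k \<in> {1..4::nat}" "l \<in> {1..4::nat}" "\<phi> k = \<phi> l"
    then show "k = l" using pdiff[of k l] pi_gt3 by (cases "k = l") auto
  qed
  have cS: "card S = 4" unfolding S_def using card_image[OF inj] by simp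
  have fS: "finite S" unfolding S_def by simp
  define xs where "xs = sorted_list_of_set S"
  have xs1: "sorted_wrt (<) xs" unfolding xs_def by (rule strict_sorted_list_of_set)
  have xs2: "set xs = S" unfolding xs_def using fS by simp
  have xs3: "length xs = 4" unfolding xs_def using cS by simp
  have inS: "xs ! m \<in> S" if "m < 4" for m using that xs2 xs3 nth_mem by fastforce
  have lt: "xs ! m < xs ! n" if "m < n" "n < 4" for m n
    using sorted_wrt_nth_less[OF xs1 that(1)] that xs3 by simp
  have Sprop: "-pi < q \<and> q \<le> pi \<and> pi/3 < \<bar>q\<bar>" if "q \<in> S" for q
    using that prange pabs unfolding S_def by auto
  have Sdiff: "pi/3 < \<bar>q - r\<bar> \<and> \<bar>q - r\<bar> < 5*pi/3" if qS: "q \<in> S" and rS: "r \<in> S" and qr: "q \<noteq> r" for q r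
  proof -
    obtain k where k: "k \<in> {1..4}" "q = \<phi> k" using qS unfolding S_def by blast
    obtain l where l: "l \<in> {1..4}" "r = \<phi> l" using rS unfolding S_def by blast
    have kl: "k \<in> {1..4}" "l \<in> {1..4}" "q = \<phi> k" "r = \<phi> l" using k l by auto
    then have "k \<noteq> l" using qr by auto
    then show ?thesis using pdiff[of k l] kl by auto
  qed
  have sel: "0 < xs!2 \<and> xs!2 < pi \<and> xs!1 < 0 \<and> xs!2 - xs!1 < pi"
  proof (rule select_sorted[of "xs!0" "xs!1" "xs!2" "xs!3"])
    show "xs!0 < xs!1" "xs!1 < xs!2" "xs!2 < xs!3" by (auto intro: lt)
    show "-pi < xs!0" "xs!3 \<le> pi" "pi/3 < \<bar>xs!1\<bar>" "pi/3 < \<bar>xs!2\<bar>"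
      using Sprop[OF inS] by auto
    show "pi/3 < \<bar>xs!1 - xs!0\<bar>" using Sdiff[OF inS[of 1] inS[of 0]] lt[of 0 1] by auto
    show "pi/3 < \<bar>xs!2 - xs!1\<bar>" using Sdiff[OF inS[of 2] inS[of 1]] lt[of 1 2] by auto
    show "pi/3 < \<bar>xs!3 - xs!2\<bar>" using Sdiff[OF inS[of 3] inS[of 2]] lt[of 2 3] by auto
    show "\<bar>xs!3 - xs!0\<bar> < 5*pi/3" using Sdiff[OF inS[of 3] inS[of 0]] lt[of 0 3] by auto
  qed
  obtain i where i: "i \<in> {1..4}" "\<phi> i = xs!2" using inS[of 2] unfolding S_def by auto
  obtain j where j: "j \<in> {1..4}" "\<phi> j = xs!1" using inS[of 1] unfolding S_def by auto
  have ij: "i \<noteq> j" using i j sel by auto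
  have i5: "i \<in> {1..5}" and j5: "j \<in> {1..5}" using i j by auto
  define a where "a = w i"
  define c where "c = w j"
  have s_pos: "Im a > 0"
    using Im_w[OF i5] sel i wpos[OF i5] by (simp add: a_def sin_gt_zero)
  have t_pos: "- Im c > 0"
  proof -
    have "sin (- \<phi> j) > 0" using sel j by (intro sin_gt_zero) auto
    then have "sin (\<phi> j) < 0" by simp
    then show ?thesis using Im_w[OF j5] wpos[OF j5] by (simp add: c_def mult_pos_neg)
  qed
  have cone: "Im a * Re c + (- Im c) * Re a > 0"
  proof -
    have "Im a * Re c + (- Im c) * Re a = cmod a * cmod c * sin (\<phi> i - \<phi> j)"
      using Re_w[OF i5] Im_w[OF i5] Re_w[OF j5] Im_w[OF j5] unfolding a_def c_def
      by (simp add: sin_diff algebra_simps)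
    moreover have "sin (\<phi> i - \<phi> j) > 0" using sel i j by (intro sin_gt_zero) auto
    ultimately show ?thesis using wpos[OF i5] wpos[OF j5] by (simp add: a_def c_def)
  qed
  have ra: "2 * Re a < 1"
  proof (rule re_lt_half)
    have "R' \<le> cmod (w i - w 5)" using sepw[OF i5, of 5] i by auto
    then show "cmod a < cmod (a - 1)" using wne(3)[OF i(1)] w5 by (simp add: a_def)
  qed
  have rc: "2 * Re c < 1"
  proof (rule re_lt_half)
    have "R' \<le> cmod (w j - w 5)" using sepw[OF j5, of 5] j by auto
    then show "cmod c < cmod (c - 1)" using wne(3)[OF j(1)] w5 by (simp add: c_def)
  qed
  have A1: "1 \<le> (Re a)^2 + (Im a)^2"
    using wne(2)[OF i(1)] by (simp add: a_def cmod_sq[symmetric] one_less_power less_imp_le)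
  have C1: "1 \<le> (Re c)^2 + (- Im c)^2"
    using wne(2)[OF j(1)] by (simp add: c_def cmod_sq[symmetric] one_less_power less_imp_le)
  have key: "(Re a + Re c - 1)^2 + (Im a - - Im c)^2 < max ((Re a)^2 + (Im a)^2) ((Re c)^2 + (- Im c)^2)"
    by (rule coord_lemma[OF s_pos t_pos cone ra rc A1 C1])
  then have "(cmod (a + c - 1))^2 < max ((cmod a)^2) ((cmod c)^2)"
    by (simp add: cmod_sq)
  then have sq: "(cmod (a + c - 1))^2 < max ((cmod a)^2) ((cmod c)^2)" .
  have lt1: "cmod (a + c - 1) < max (cmod a) (cmod c)"
  proof (cases "cmod a \<le> cmod c")
    case True
    then have "(cmod a)^2 \<le> (cmod c)^2" by (simp add: power_mono)
    then have "(cmod (a + c - 1))^2 < (cmod c)^2" using sq by (simp add: max_def)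
    then have "cmod (a + c - 1) < cmod c" by (rule power2_less_imp_less) simp
    then show ?thesis by simp
  next
    case False
    then have "(cmod c)^2 \<le> (cmod a)^2" by (simp add: power_mono)
    then have "(cmod (a + c - 1))^2 < (cmod a)^2" using sq by (simp add: max_def split: if_splits)
    then have "cmod (a + c - 1) < cmod a" by (rule power2_less_imp_less) simp
    then show ?thesis by simp
  qed
  have "z i + z j - z 5 = z 5 * (a + c - 1)"
    using z5 by (simp add: a_def c_def w_def algebra_simps)
  then have "cmod (z i + z j - z 5) = cmod (z 5) * cmod (a + c - 1)" by (simp add: norm_mult)
  also have "\<dots> < cmod (z 5) * max (cmod a) (cmod c)" using lt1 n5 by simp
  also have "\<dots> = max (cmod (z i)) (cmod (z j))"
    using n5 by (simp add: a_def c_def wk max_mult_distrib_left)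
  finally have lt2: "cmod (z i + z j - z 5) < max (cmod (z i)) (cmod (z j))" .
  show False
  proof (cases "z i + z j - z 5 = 0")
    case True
    then have "z i - z 5 = - z j" by (simp add: algebra_simps)
    then have "cmod (z i - z 5) = cmod (z j)" by simp
    moreover have "R \<le> cmod (z i - z 5)" using sep[OF i5, of 5] i by auto
    ultimately show False using short[OF j(1)] by simp
  next
    case False
    then show False using D[OF i(1) j(1) ij False] lt2 by (simp add: less_max_iff_disj)
  qed
qed



lemma Xs_mono: "s \<le> s' \<Longrightarrow> Xs M s \<subseteq> Xs M s'"
  by (auto simp: Xs_def)

lemma Gs_eq:
  assumes "s \<le> s'" "x \<in> Xs M s" "\<forall>y \<in> Xs M s'. cmod (cv x) \<le> cmod (cv y)"
  shows "Gs M s = Gs M s'"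
proof -
  have xs': "x \<in> Xs M s'" using assms(1,2) Xs_mono by blast
  have "Gs M s = cmod (cv x)" unfolding Gs_def
    by (rule cInf_eq_minimum) (use assms Xs_mono in blast)+
  moreover have "Gs M s' = cmod (cv x)" unfolding Gs_def
    by (rule cInf_eq_minimum) (use assms xs' in blast)+
  ultimately show ?thesis by simp
qed

lemma core:
  fixes M :: "real^3^3" and s :: "nat \<Rightarrow> real"
  assumes det: "det M = 1"
    and smono: "\<And>k l. k < l \<Longrightarrow> l \<le> 5 \<Longrightarrow> s k < s l"
    and s0: "1/2 \<le> s 0" and s5: "s 5 < 1"
    and dist: "\<And>k l. k \<le> 5 \<Longrightarrow> l \<le> 5 \<Longrightarrow> k \<noteq> l \<Longrightarrow> Gs M (s k) \<noteq> Gs M (s l)"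
  shows False
proof -
  define f where "f = (\<lambda>x. cmod (cv x))"
  have sle1: "s k < 1" if "k \<le> 5" for k
    using smono[of k 5] that s5 by (cases "k = 5") auto
  have sge: "1/2 \<le> s k" if "k \<le> 5" for k
    using smono[of 0 k] that s0 by (cases "k = 0") auto
  have ne: "Xs M (s k) \<noteq> {}" if "k \<in> {1..5}" for k
  proof
    assume e: "Xs M (s k) = {}"
    have "Xs M (s 0) \<subseteq> Xs M (s k)" using smono[of 0 k] that by (intro Xs_mono) auto
    then have "Xs M (s 0) = {}" using e by blast
    then have "Gs M (s 0) = Gs M (s k)" using e by (simp add: Gs_def)
    then show False using dist[of 0 k] that by auto
  qed
  have "\<forall>k\<in>{1..5}. \<exists>x\<in>Xs M (s k). (\<forall>y\<in>Xs M (s k). f x \<le> f y) \<and> Gs M (s k) = f x"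
  proof
    fix k assume k: "k \<in> {1..5::nat}"
    then obtain x0 where "x0 \<in> Xs M (s k)" using ne by blast
    then show "\<exists>x\<in>Xs M (s k). (\<forall>y\<in>Xs M (s k). f x \<le> f y) \<and> Gs M (s k) = f x"
      unfolding f_def using attain[OF det, of x0 "s k"] sle1[of k] k by auto
  qed
  then obtain x where xX: "\<And>k. k \<in> {1..5} \<Longrightarrow> x k \<in> Xs M (s k)"
    and xmin: "\<And>k y. k \<in> {1..5} \<Longrightarrow> y \<in> Xs M (s k) \<Longrightarrow> f (x k) \<le> f y"
    and xG: "\<And>k. k \<in> {1..5} \<Longrightarrow> Gs M (s k) = f (x k)"
    by metis
  have xL: "x k \<in> lattice3 M" "cv (x k) \<noteq> 0" "0 \<le> x k $ 1" "x k $ 1 < s k" if "k \<in> {1..5}" for k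
    using xX[OF that] by (auto simp: Xs_def)
  have ugt: "s k \<le> x l $ 1" if "k < l" "l \<in> {1..5}" for k l
  proof (rule ccontr)
    assume "\<not> s k \<le> x l $ 1"
    then have "x l \<in> Xs M (s k)" using xX[OF that(2)] by (auto simp: Xs_def)
    then have "Gs M (s k) = Gs M (s l)"
      using smono[of k l] that xmin[OF that(2)] unfolding f_def by (intro Gs_eq) auto
    then show False using dist[of k l] that by auto
  qed
  have uhalf: "1/2 \<le> x k $ 1" if "k \<in> {1..5}" for k
    using ugt[of 0 k] that s0 by auto
  have ult1: "x k $ 1 < 1" if "k \<in> {1..5}" for k
    using xL(4)[OF that] sle1[of k] that by auto
  have uinc: "x k $ 1 < x l $ 1" if "k < l" "k \<in> {1..5}" "l \<in> {1..5}" for k l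
    using xL(4)[OF that(2)] ugt[OF that(1,3)] by auto
  have fdec: "f (x l) < f (x k)" if "k < l" "k \<in> {1..5}" "l \<in> {1..5}" for k l
  proof -
    have "x k \<in> Xs M (s l)" using xX[OF that(2)] smono[of k l] that by (auto simp: Xs_def)
    then have "f (x l) \<le> f (x k)" using xmin[OF that(3)] by blast
    moreover have "f (x l) \<noteq> f (x k)" using dist[of k l] xG that by auto
    ultimately show ?thesis by simp
  qed
  have diffX: "x l - x k \<in> Xs M (s 0)" if "k < l" "k \<in> {1..5}" "l \<in> {1..5}" for k l
  proof -
    have "cv (x l) \<noteq> cv (x k)" using fdec[OF that] unfolding f_def by auto
    then have "cv (x l - x k) \<noteq> 0" by (simp add: cv_diff)
    moreover have "x l - x k \<in> lattice3 M" using xL that by (intro lat_diff) auto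
    moreover have "0 \<le> (x l - x k) $ 1" "(x l - x k) $ 1 < s 0"
      using uinc[OF that] uhalf[OF that(2)] ult1[OF that(3)] s0 by auto
    ultimately show ?thesis by (simp add: Xs_def)
  qed
  obtain x0 where x0X: "x0 \<in> Xs M (s 0)" and x0min: "\<forall>y\<in>Xs M (s 0). f x0 \<le> f y"
    and x0G: "Gs M (s 0) = f x0"
    using attain[OF det diffX[of 1 2]] sle1[of 0] unfolding f_def by auto
  have fx0: "f (x k) < f x0" if "k \<in> {1..5}" for k
  proof -
    have "x0 \<in> Xs M (s k)" using x0X smono[of 0 k] that Xs_mono[of "s 0" "s k" M] by auto
    then have "f (x k) \<le> f x0" using xmin[OF that] by blast
    moreover have "f (x k) \<noteq> f x0" using dist[of 0 k] xG[OF that] x0G that by auto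
    ultimately show ?thesis by simp
  qed
  have sep: "f x0 \<le> cmod (cv (x k) - cv (x l))" if "k \<in> {1..5}" "l \<in> {1..5}" "k \<noteq> l" for k l
  proof (cases "k < l")
    case True
    have "f x0 \<le> f (x l - x k)" using x0min diffX[OF True that(1,2)] by blast
    then show ?thesis by (simp add: f_def cv_diff norm_minus_commute)
  next
    case False
    then have "l < k" using that by auto
    have "f x0 \<le> f (x k - x l)" using x0min diffX[OF \<open>l < k\<close> that(2,1)] by blast
    then show ?thesis by (simp add: f_def cv_diff)
  qed
  have Dq: "max (cmod (cv (x i))) (cmod (cv (x j))) \<le> cmod (cv (x i) + cv (x j) - cv (x 5))"
    if "i \<in> {1..4}" "j \<in> {1..4}" "i \<noteq> j" "cv (x i) + cv (x j) - cv (x 5) \<noteq> 0" for i j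
  proof -
    define q where "q = x i + x j - x 5"
    have i5: "i \<in> {1..5}" "i < 5" and j5: "j \<in> {1..5}" "j < 5" using that by auto
    have cq: "cv q = cv (x i) + cv (x j) - cv (x 5)" by (simp add: q_def cv_add cv_diff)
    have qL: "q \<in> lattice3 M" unfolding q_def using xL i5 j5 by (intro lat_diff lat_add) auto
    have u5: "x i $ 1 < x 5 $ 1" "x j $ 1 < x 5 $ 1" using uinc i5 j5 by auto
    have q1: "q $ 1 = x i $ 1 + x j $ 1 - x 5 $ 1" by (simp add: q_def)
    have q0: "0 \<le> q $ 1" using q1 uhalf[OF i5(1)] uhalf[OF j5(1)] ult1[of 5] by auto
    have "q \<in> Xs M (s i)" using qL q0 q1 u5 xL(4)[OF i5(1)] cq that(4) by (auto simp: Xs_def)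
    then have a: "f (x i) \<le> f q" using xmin[OF i5(1)] by blast
    have "q \<in> Xs M (s j)" using qL q0 q1 u5 xL(4)[OF j5(1)] cq that(4) by (auto simp: Xs_def)
    then have b: "f (x j) \<le> f q" using xmin[OF j5(1)] by blast
    show ?thesis using a b cq unfolding f_def by simp
  qed
  show False
  proof (rule geom[of "\<lambda>k. cv (x k)" "f x0"])
    show "cv (x 5) \<noteq> 0" using xL(2)[of 5] by auto
    show "cmod (cv (x 5)) < cmod (cv (x k)) \<and> cmod (cv (x k)) < f x0" if "k \<in> {1..4}" for k
      using fdec[of k 5] fx0[of k] that unfolding f_def by auto
    show "f x0 \<le> cmod (cv (x k) - cv (x l))" if "k \<in> {1..5}" "l \<in> {1..5}" "k \<noteq> l" for k l
      using sep that by blast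
    show "max (cmod (cv (x i))) (cmod (cv (x j))) \<le> cmod (cv (x i) + cv (x j) - cv (x 5))"
      if "i \<in> {1..4}" "j \<in> {1..4}" "i \<noteq> j" "cv (x i) + cv (x j) - cv (x 5) \<noteq> 0" for i j
      using Dq that by blast
  qed
qed



lemma values_bound:
  fixes M :: "real^3^3"
  assumes det: "det M = 1"
  shows "finite (Gs M ` {s. 1/2 \<le> s \<and> s < 1}) \<and> card (Gs M ` {s. 1/2 \<le> s \<and> s < 1}) \<le> 5"
proof (rule ccontr)
  define I where "I = {s::real. 1/2 \<le> s \<and> s < 1}"
  define V where "V = Gs M ` I"
  assume "\<not> (finite (Gs M ` {s. 1/2 \<le> s \<and> s < 1}) \<and> card (Gs M ` {s. 1/2 \<le> s \<and> s < 1}) \<le> 5)"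
  then have "\<not> (finite V \<and> card V \<le> 5)" unfolding V_def I_def .
  then obtain T where T: "T \<subseteq> V" "card T = 6" "finite T"
  proof (cases "finite V")
    case True
    then have "6 \<le> card V" using \<open>\<not> (finite V \<and> card V \<le> 5)\<close> by auto
    then show ?thesis using obtain_subset_with_card_n that by metis
  next
    case False
    then show ?thesis using infinite_arbitrarily_large[OF False, of 6] that by blast
  qed
  define g where "g = inv_into I (Gs M)"
  define S where "S = g ` T"
  have injg: "inj_on g T" unfolding g_def using T(1) unfolding V_def by (rule inj_on_inv_into)
  have cS: "card S = 6" unfolding S_def using card_image[OF injg] T(2) by simp
  have fS: "finite S" unfolding S_def using T(3) by simp
  have SI: "S \<subseteq> I" unfolding S_def g_def using T(1) unfolding V_def by (auto intro: inv_into_into)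
  have injG: "inj_on (Gs M) S"
  proof (rule inj_onI)
    fix a b assume "a \<in> S" "b \<in> S" "Gs M a = Gs M b"
    then obtain y y' where "y \<in> T" "y' \<in> T" "a = g y" "b = g y'" unfolding S_def by auto
    moreover have "Gs M (g y) = y" "Gs M (g y') = y'"
      using T(1) \<open>y \<in> T\<close> \<open>y' \<in> T\<close> unfolding g_def V_def by (auto intro: f_inv_into_f)
    ultimately show "a = b" using \<open>Gs M a = Gs M b\<close> by simp
  qed
  define xs where "xs = sorted_list_of_set S"
  have xs1: "sorted_wrt (<) xs" unfolding xs_def by (rule strict_sorted_list_of_set)
  have xs2: "set xs = S" unfolding xs_def using fS by simp
  have xs3: "length xs = 6" unfolding xs_def using cS by simp
  have inS: "xs ! m \<in> S" if "m \<le> 5" for m using that xs2 xs3 nth_mem by fastforce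
  show False
  proof (rule core[OF det, of "\<lambda>k. xs ! k"])
    show "xs ! k < xs ! l" if "k < l" "l \<le> 5" for k l
      using sorted_wrt_nth_less[OF xs1 that(1)] that xs3 by simp
    show "1/2 \<le> xs ! 0" using inS[of 0] SI by (auto simp: I_def)
    show "xs ! 5 < 1" using inS[of 5] SI by (auto simp: I_def)
    show "Gs M (xs ! k) \<noteq> Gs M (xs ! l)" if "k \<le> 5" "l \<le> 5" "k \<noteq> l" for k l
    proof
      assume "Gs M (xs ! k) = Gs M (xs ! l)"
      then have "xs ! k = xs ! l" using injG inS that by (auto dest: inj_onD)
      moreover have "distinct xs" using xs1 by (simp add: strict_sorted_iff)
      ultimately show False using that xs3 by (simp add: nth_eq_iff_index_eq)
    qed
  qed
qed

theorem theorem5p1: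
  fixes M :: "real^3^3"
  assumes "det M = 1"
  shows "finite (GD_set (sphere 0 1) M) \<and> card (GD_set (sphere 0 1) M) \<le> 5"
proof -
  have sub: "GD_set (sphere 0 1) M \<subseteq> Gs M ` {s. 1/2 \<le> s \<and> s < 1}"
  proof
    fix y assume "y \<in> GD_set (sphere 0 1) M"
    then obtain t where t: "0 < t" "t < 1" "y = FD (sphere 0 1) M t" by (auto simp: GD_set_def)
    then have "y = Gs M (max t (1 - t))" using FD_eq by simp
    moreover have "max t (1 - t) \<in> {s. 1/2 \<le> s \<and> s < 1}" using t by (auto simp: max_def)
    ultimately show "y \<in> Gs M ` {s. 1/2 \<le> s \<and> s < 1}" by blast
  qed
  have vb: "finite (Gs M ` {s. 1/2 \<le> s \<and> s < 1}) \<and> card (Gs M ` {s. 1/2 \<le> s \<and> s < 1}) \<le> 5"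
    using values_bound[OF assms] .
  then have "finite (GD_set (sphere 0 1) M)" using sub finite_subset by blast
  moreover have "card (GD_set (sphere 0 1) M) \<le> 5" using vb sub card_mono[of _ "GD_set (sphere 0 1) M"] by fastforce
  ultimately show ?thesis by simp
qed

end
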